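(* Let $\alpha=\ln2/\ln3$ and let $(p_k/q_k)_{k\ge0}$ be the convergents of its simple continued fraction expansion $\alpha=[0;1,1,1,2,2,3,1,5,\ldots]$, indexed so that $p_0/q_0=0/1$, $p_1/q_1=1/1$, $p_2/q_2=1/2$, $p_3/q_3=2/3$, $p_4/q_4=5/8,\ldots$. Then for every odd $k>1$, $$\left|\sum_{i=1}^{p_k}\frac{2^{\lfloor (i-1)/\alpha\rfloor}}{3^i}-\frac{p_k}{6\ln2}\right|<\frac16.$$
   Context: The sum $\sum_{i=1}^{p_k}2^{\lfloor (i-1)/\alpha\rfloor}/3^i$ equals $-\Phi_{\mathbb{R}}(w_k)$, where $w_k$ is the Christoffel word $(\lceil(j+1)p_k/q_k\rceil-\lceil jp_k/q_k\rceil)_{j=0}^{q_k-1}$ (of length $q_k$ and height $p_k$) and $\Phi_{\mathbb{R}}(w)=-\sum_i 2^{d_i}/3^{i+1}$ over the positions $d_i$ of the $1$'s of $w$. *)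

theory Defs
  imports Complex_Main
begin

definition alpha :: real where
  "alpha = ln 2 / ln 3"

fun cf_rem :: "real \<Rightarrow> nat \<Rightarrow> real" where
  "cf_rem x 0 = x"
| "cf_rem x (Suc n) = 1 / (cf_rem x n - of_int \<lfloor>cf_rem x n\<rfloor>)"

definition cf_quot :: "real \<Rightarrow> nat \<Rightarrow> int" where
  "cf_quot x n = \<lfloor>cf_rem x n\<rfloor>"

text \<open>Shifted numerators/denominators: cf_P x n = p_(n-2), cf_Q x n = q_(n-2),
  with p_(-2)=0, p_(-1)=1, q_(-2)=1, q_(-1)=0.\<close>
fun cf_P :: "real \<Rightarrow> nat \<Rightarrow> int" where
  "cf_P x 0 = 0"
| "cf_P x (Suc 0) = 1"
| "cf_P x (Suc (Suc n)) = cf_quot x n * cf_P x (Suc n) + cf_P x n"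

fun cf_Q :: "real \<Rightarrow> nat \<Rightarrow> int" where
  "cf_Q x 0 = 1"
| "cf_Q x (Suc 0) = 0"
| "cf_Q x (Suc (Suc n)) = cf_quot x n * cf_Q x (Suc n) + cf_Q x n"

text \<open>The k-th convergent p_k / q_k (standard indexing, p_0/q_0 = a_0/1).\<close>
definition conv_num :: "real \<Rightarrow> nat \<Rightarrow> int" where
  "conv_num x k = cf_P x (k + 2)"

definition conv_den :: "real \<Rightarrow> nat \<Rightarrow> int" where
  "conv_den x k = cf_Q x (k + 2)"

end

theory Submission imports Defs "HOL-Number_Theory.Cong" begin
lemma alpha_pos: "0 < alpha" and alpha_lt1: "alpha < 1"
  unfolding alpha_def by (auto simp: divide_simps)

lemma alpha_irr: "alpha \<notin> \<rat>"
proof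
  assume "alpha \<in> \<rat>"
  then obtain a b :: nat where b: "b > 0" and ab: "\<bar>alpha\<bar> = real a / real b"
    by (metis Rats_abs_nat_div_natE gr0I)
  have "alpha = real a / real b" using ab alpha_pos by simp
  hence "real b * ln 2 = real a * ln 3" using b unfolding alpha_def by (simp add: field_simps)
  hence "ln (2 ^ b) = ln ((3::real) ^ a)" by (simp add: ln_realpow)
  hence "(2::real) ^ b = 3 ^ a" by simp
  hence "(2::nat) ^ b = 3 ^ a" by (metis of_nat_eq_of_nat_power_cancel_iff of_nat_numeral)
  hence "even ((3::nat) ^ a)" using b by (metis dvd_power even_numeral)
  thus False by simp
qed

lemma cf_rem_irr: "cf_rem alpha n \<notin> \<rat>"
proof (induction n rule: nat.induct)
  case zero thus ?case using alpha_irr by simp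
next
  case (Suc n)
  show ?case
  proof
    assume h: "cf_rem alpha (Suc n) \<in> \<rat>"
    have "cf_rem alpha n = of_int \<lfloor>cf_rem alpha n\<rfloor> + inverse (cf_rem alpha (Suc n))"
      by (simp add: divide_inverse)
    also have "\<dots> \<in> \<rat>" using h by (intro Rats_add Rats_inverse) auto
    finally show False using Suc by simp
  qed
qed

lemma cf_rem_nonint: "cf_rem alpha n \<noteq> of_int \<lfloor>cf_rem alpha n\<rfloor>"
  using cf_rem_irr[of n] by (metis Rats_of_int)

lemma frac_bounds: "0 < cf_rem alpha n - of_int \<lfloor>cf_rem alpha n\<rfloor>"
  "cf_rem alpha n - of_int \<lfloor>cf_rem alpha n\<rfloor> < 1"
  using cf_rem_nonint[of n] of_int_floor_le[of "cf_rem alpha n"] real_of_int_floor_add_one_gt[of "cf_rem alpha n"]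
  by linarith+

lemma cf_rem_gt1: "cf_rem alpha (Suc n) > 1"
proof -
  have "1 / (cf_rem alpha n - of_int \<lfloor>cf_rem alpha n\<rfloor>) > 1"
    using frac_bounds[of n] by (simp add: divide_simps)
  thus ?thesis by simp
qed

lemma cf_rem_pos: "cf_rem alpha n > 0"
proof (cases n)
  case 0 thus ?thesis using alpha_pos by simp
next
  case (Suc m)
  have "1 < cf_rem alpha (Suc m)" by (rule cf_rem_gt1)
  thus ?thesis using Suc by (simp del: cf_rem.simps)
qed

lemma cf_quot_nonneg: "cf_quot alpha n \<ge> 0"
  using cf_rem_pos[of n] unfolding cf_quot_def by simp

lemma cf_quot_ge1: "cf_quot alpha (Suc n) \<ge> 1"
  using cf_rem_gt1[of n] unfolding cf_quot_def by simp

lemma cf_Q_nonneg: "cf_Q alpha n \<ge> 0 \<and> cf_Q alpha (Suc n) \<ge> 0"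
  by (induction n) (auto intro!: add_nonneg_nonneg mult_nonneg_nonneg cf_quot_nonneg)

lemma cf_Q_ge1: "cf_Q alpha (Suc (Suc n)) \<ge> 1"
proof (induction n)
  case 0 thus ?case by simp
next
  case (Suc n)
  have "cf_Q alpha (Suc (Suc (Suc n))) = cf_quot alpha (Suc n) * cf_Q alpha (Suc (Suc n)) + cf_Q alpha (Suc n)"
    by simp
  moreover have "cf_quot alpha (Suc n) * cf_Q alpha (Suc (Suc n)) \<ge> 1"
    using Suc cf_quot_ge1[of n] by (metis mult_mono' mult_1 zero_le_one)
  ultimately show ?case using cf_Q_nonneg[of n] by linarith
qed

lemma cf_det: "cf_P alpha (Suc n) * cf_Q alpha n - cf_P alpha n * cf_Q alpha (Suc n) = (-1) ^ n"
proof (induction n)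
  case 0 thus ?case by simp
next
  case (Suc n)
  thus ?case by (simp add: algebra_simps)
qed

lemma den_pos: "real_of_int (cf_Q alpha (Suc n)) * cf_rem alpha n + cf_Q alpha n > 0"
proof (cases n)
  case 0 thus ?thesis by simp
next
  case (Suc m)
  have "real_of_int (cf_Q alpha (Suc (Suc m))) \<ge> 1" using cf_Q_ge1[of m] by linarith
  moreover have "cf_rem alpha (Suc m) > 1" by (rule cf_rem_gt1)
  moreover have "real_of_int (cf_Q alpha (Suc m)) \<ge> 0" using cf_Q_nonneg[of m] by simp
  ultimately show ?thesis using Suc
    by (smt (verit) mult_less_cancel_left2 mult_nonneg_nonneg)
qed

lemma cf_repr: "alpha = (real_of_int (cf_P alpha (Suc n)) * cf_rem alpha n + cf_P alpha n) /
   (real_of_int (cf_Q alpha (Suc n)) * cf_rem alpha n + cf_Q alpha n)"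
proof (induction n)
  case 0 thus ?case by simp
next
  case (Suc n)
  define x where "x = cf_rem alpha n"
  define y where "y = cf_rem alpha (Suc n)"
  have xy: "x = of_int (cf_quot alpha n) + 1 / y"
    unfolding x_def y_def cf_quot_def by simp
  have y0: "y > 0" unfolding y_def by (rule cf_rem_pos)
  have d1: "real_of_int (cf_Q alpha (Suc n)) * x + cf_Q alpha n > 0"
    using den_pos[of n] x_def by simp
  have d2: "real_of_int (cf_Q alpha (Suc (Suc n))) * y + cf_Q alpha (Suc n) > 0"
    using den_pos[of "Suc n"] y_def by simp
  have "alpha = (real_of_int (cf_P alpha (Suc n)) * x + cf_P alpha n) /
   (real_of_int (cf_Q alpha (Suc n)) * x + cf_Q alpha n)" using Suc x_def by simp
  also have "\<dots> = (real_of_int (cf_P alpha (Suc (Suc n))) * y + cf_P alpha (Suc n)) /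
   (real_of_int (cf_Q alpha (Suc (Suc n))) * y + cf_Q alpha (Suc n))"
  proof -
    have n: "real_of_int (cf_P alpha (Suc n)) * x + cf_P alpha n = (real_of_int (cf_P alpha (Suc (Suc n))) * y + cf_P alpha (Suc n)) / y"
      using y0 unfolding xy by (simp add: field_simps)
    have d: "real_of_int (cf_Q alpha (Suc n)) * x + cf_Q alpha n = (real_of_int (cf_Q alpha (Suc (Suc n))) * y + cf_Q alpha (Suc n)) / y"
      using y0 unfolding xy by (simp add: field_simps)
    show ?thesis unfolding n d using y0 by simp
  qed
  finally show ?case unfolding y_def .
qed

lemma exp_strict: "(x::real) \<noteq> 0 \<Longrightarrow> 1 + x < exp x"
proof (cases "1 + x \<le> 0")
  case True thus ?thesis using exp_gt_zero[of x] by linarith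
next
  case False
  assume x: "x \<noteq> 0"
  have h: "1 + x/2 \<le> exp (x/2)" by (rule exp_ge_add_one_self)
  have "(1 + x/2)^2 \<le> exp (x/2) ^ 2" using h False by (intro power_mono) auto
  also have "exp (x/2) ^ 2 = exp x" by (simp add: exp_double[symmetric])
  finally have "1 + x + x^2/4 \<le> exp x" by (simp add: power2_eq_square algebra_simps)
  moreover have "x^2 > 0" using x by simp
  ultimately show ?thesis by linarith
qed

lemma bij_mult_mod:
  fixes p q :: nat
  assumes "coprime p q"
  shows "bij_betw (\<lambda>j. j * q mod p) {..<p} {..<p}"
proof (cases "p = 0")
  case True thus ?thesis by (simp add: bij_betw_def)
next
  case False
  have inj: "inj_on (\<lambda>j. j * q mod p) {..<p}"
  proof (rule inj_onI)
    fix a b assume a: "a \<in> {..<p}" and b: "b \<in> {..<p}" and e: "a * q mod p = b * q mod p"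
    have "[a * q = b * q] (mod p)" using e by (simp add: cong_def)
    hence "[a = b] (mod p)" using assms by (simp add: cong_mult_rcancel_nat coprime_commute)
    thus "a = b" using a b by (simp add: cong_def)
  qed
  have sub: "(\<lambda>j. j * q mod p) ` {..<p} \<subseteq> {..<p}" using False by auto
  have "(\<lambda>j. j * q mod p) ` {..<p} = {..<p}"
    using inj sub by (simp add: card_image card_subset_eq)
  thus ?thesis using inj by (simp add: bij_betw_def)
qed

lemma sum_bound:
  fixes p q :: nat and b :: real
  assumes p1: "p \<ge> 1" and cop: "coprime p q" and bdef: "b = ln 3 / ln 2"
    and epos: "0 < p * b - q" and esmall: "(p - 1) * (p * b - q) < 1"
  shows "\<bar>(\<Sum>i = 1..p. (2::real) ^ nat \<lfloor>real (i - 1) * b\<rfloor> / 3 ^ i) - real p / (6 * ln 2)\<bar> < 1/6"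
proof -
  define e where "e = p * b - q"
  define t where "t = ln 2 / p"
  have tpos: "t > 0" using p1 unfolding t_def by simp
  have pt: "real p * t = ln 2" using p1 unfolding t_def by simp
  define g where "g = (\<lambda>r::nat. exp (- (real r * t)))"
  have tm: "(2::real) ^ nat \<lfloor>real j * b\<rfloor> / 3 ^ Suc j = exp (- ((real (j * q mod p) + j * e) * t)) / 3"
    if j: "j < p" for j
  proof -
    define m where "m = j * q div p"
    define r where "r = j * q mod p"
    have jq: "j * q = p * m + r" unfolding m_def r_def by simp
    have rp: "r + 1 \<le> p" unfolding r_def using p1 by (simp add: Suc_leI)
    have je0: "0 \<le> j * e" using epos unfolding e_def by simp
    have "real j * e \<le> real (p - 1) * e" using j epos unfolding e_def
      by (intro mult_right_mono) auto
    hence je1: "j * e < 1" using esmall p1 unfolding e_def by (simp add: of_nat_diff)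
    have jb: "real j * b = m + (r + j * e) / p"
    proof -
      have "real j * b = (real (j * q) + j * e) / p" using p1 unfolding e_def by (simp add: field_simps)
      also have "\<dots> = m + (r + j * e) / p" unfolding jq using p1 by (simp add: field_simps)
      finally show ?thesis .
    qed
    have f0: "0 \<le> (r + j * e) / p" using je0 by simp
    have f1: "(r + j * e) / p < 1" using je1 rp p1 by (simp add: divide_simps)
    have fl: "\<lfloor>real j * b\<rfloor> = int m" unfolding jb using f0 f1
      by (simp add: floor_unique)
    have l3: "ln 3 = b * ln 2" unfolding bdef by simp
    have "(2::real) ^ nat \<lfloor>real j * b\<rfloor> = exp (real m * ln 2)"
      unfolding fl by (simp add: exp_of_nat_mult)
    moreover have "(3::real) ^ Suc j = 3 * exp (real j * b * ln 2)"
    proof -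
      have "exp (real j * ln 3) = exp (ln (3::real)) ^ j" by (rule exp_of_nat_mult)
      hence "(3::real) ^ j = exp (real j * ln 3)" by simp
      hence "(3::real) ^ j = exp (real j * (b * ln 2))" by (simp only: l3)
      thus ?thesis by (simp add: mult.assoc)
    qed
    ultimately have "(2::real) ^ nat \<lfloor>real j * b\<rfloor> / 3 ^ Suc j = exp (real m * ln 2 - real j * b * ln 2) / 3"
      by (simp add: exp_diff)
    also have "real m * ln 2 - real j * b * ln 2 = - ((r + j * e) * t)"
      unfolding jb t_def by (simp add: field_simps)
    finally show ?thesis unfolding r_def .
  qed
  define X where "X = (\<Sum>j<p. exp (- ((real (j * q mod p) + j * e) * t)))"
  have S: "(\<Sum>i = 1..p. (2::real) ^ nat \<lfloor>real (i - 1) * b\<rfloor> / 3 ^ i) = X / 3"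
  proof -
    have "(\<Sum>i = 1..p. (2::real) ^ nat \<lfloor>real (i - 1) * b\<rfloor> / 3 ^ i) =
          (\<Sum>j<p. (2::real) ^ nat \<lfloor>real j * b\<rfloor> / 3 ^ Suc j)"
      by (simp add: sum.atLeast1_atMost_eq)
    also have "\<dots> = (\<Sum>j<p. exp (- ((real (j * q mod p) + j * e) * t)) / 3)"
      using tm by (intro sum.cong) auto
    finally show ?thesis unfolding X_def by (simp add: sum_divide_distrib)
  qed
  define L where "L = (\<Sum>r<p. g r)"
  define R where "R = (\<Sum>r<p. g (Suc r))"
  have bij: "bij_betw (\<lambda>j. j * q mod p) {..<p} {..<p}" by (rule bij_mult_mod[OF cop])
  have XL: "X \<le> L"
  proof -
    have "X \<le> (\<Sum>j<p. g (j * q mod p))" unfolding X_def g_def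
      using epos tpos unfolding e_def by (intro sum_mono) (auto intro!: mult_nonneg_nonneg)
    also have "\<dots> = L" unfolding L_def by (rule sum.reindex_bij_betw[OF bij])
    finally show ?thesis .
  qed
  have XR: "R < X"
  proof -
    have "(\<Sum>j<p. g (Suc (j * q mod p))) < X" unfolding X_def
    proof (rule sum_strict_mono)
      show "finite {..<p}" by simp
      show "{..<p} \<noteq> {}" using p1 by (metis lessThan_iff less_le_trans empty_iff zero_less_one)
      fix j assume "j \<in> {..<p}"
      hence j: "j < p" by simp
      have "real j * e \<le> real (p - 1) * e" using j epos unfolding e_def
        by (intro mult_right_mono) auto
      hence "j * e < 1" using esmall p1 unfolding e_def by (simp add: of_nat_diff)
      hence "(real (j * q mod p) + j * e) * t < real (Suc (j * q mod p)) * t"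
        using tpos by (intro mult_strict_right_mono) auto
      thus "g (Suc (j * q mod p)) < exp (- ((real (j * q mod p) + j * e) * t))"
        unfolding g_def by simp
    qed
    moreover have "(\<Sum>j<p. g (Suc (j * q mod p))) = R" unfolding R_def
      by (rule sum.reindex_bij_betw[OF bij])
    ultimately show ?thesis by simp
  qed
  have gp: "g p = 1/2" unfolding g_def using pt by (simp add: exp_minus)
  have LR: "L - R = 1/2"
  proof -
    have "L - R = (\<Sum>r<p. g r - g (Suc r))" unfolding L_def R_def by (simp add: sum_subtractf)
    also have "\<dots> = g 0 - g p" by (rule sum_lessThan_telescope')
    finally show ?thesis using gp unfolding g_def by simp
  qed
  define c where "c = exp (- t)"
  have c1: "c < 1" and c0: "c > 0" unfolding c_def using tpos by auto
  have gc: "g r = c ^ r" for r unfolding g_def c_def by (simp add: exp_of_nat_mult[symmetric])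
  have Lf: "L = (1/2) / (1 - c)"
  proof -
    have "L = (1 - c ^ p) / (1 - c)" unfolding L_def gc using c1 by (simp add: sum_gp_strict)
    also have "c ^ p = 1/2" using gp gc by simp
    finally show ?thesis by simp
  qed
  define I where "I = real p / (2 * ln 2)"
  have It: "I = 1 / (2 * t)" unfolding I_def t_def using p1 by simp
  have IL: "I < L"
  proof -
    have "1 - t < c" unfolding c_def using exp_strict[of "-t"] tpos by simp
    hence "1 - c < t" by simp
    thus ?thesis unfolding It Lf using c1 tpos by (simp add: divide_simps)
  qed
  have RI: "R < I"
  proof -
    have "1 + t < exp t" using exp_strict[of t] tpos by simp
    hence "c * (1 + t) < c * exp t" using c0 by simp
    also have "c * exp t = 1" unfolding c_def by (simp add: exp_minus)
    finally have h: "c * (1 + t) < 1" .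
    have "R = L - 1/2" using LR by simp
    also have "\<dots> = c / (2 * (1 - c))" unfolding Lf using c1 by (simp add: field_simps)
    finally have Rc: "R = c / (2 * (1 - c))" .
    have "c * t < 1 - c" using h by (simp add: algebra_simps)
    hence "c / (2 * (1 - c)) < 1 / (2 * t)" using c1 tpos by (simp add: divide_simps)
    thus ?thesis unfolding It Rc .
  qed
  have a: "\<bar>X - I\<bar> < 1/2" using XL XR IL RI LR by linarith
  have b: "X / 3 - real p / (6 * ln 2) = (X - I) / 3" unfolding I_def by (simp add: field_simps)
  show ?thesis unfolding S b using a by simp
qed

theorem lemma49:
  fixes k :: nat
  assumes "odd k" and "k > 1"
  shows "\<bar>(\<Sum>i = 1..nat (conv_num alpha k).
            (2::real) ^ nat \<lfloor>real (i - 1) / alpha\<rfloor> / 3 ^ i)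
          - real_of_int (conv_num alpha k) / (6 * ln 2)\<bar> < 1 / 6"
proof -
  define P where "P = cf_P alpha (Suc (Suc k))"
  define Q where "Q = cf_Q alpha (Suc (Suc k))"
  define P1 where "P1 = cf_P alpha (Suc k)"
  define Q1 where "Q1 = cf_Q alpha (Suc k)"
  define x where "x = cf_rem alpha (Suc k)"
  define D where "D = real_of_int Q * x + Q1"
  have cn: "conv_num alpha k = P" unfolding conv_num_def P_def by simp
  have D0: "D > 0" unfolding D_def Q_def x_def Q1_def using den_pos[of "Suc k"] by simp
  have rep: "alpha = (real_of_int P * x + P1) / D"
    unfolding D_def P_def x_def P1_def Q_def Q1_def using cf_repr[of "Suc k"] by simp
  have det: "P * Q1 - P1 * Q = 1"
    unfolding P_def Q1_def P1_def Q_def using cf_det[of "Suc k"] assms(1) by simp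
  have Q1': "Q \<ge> 1" unfolding Q_def by (rule cf_Q_ge1)
  have x1: "x > 1" unfolding x_def by (rule cf_rem_gt1)
  have Q10: "Q1 \<ge> 0" unfolding Q1_def using cf_Q_nonneg[of k] by simp
  have DQ: "D > Q"
  proof -
    have "real_of_int Q * 1 < real_of_int Q * x" using x1 Q1' by (intro mult_strict_left_mono) auto
    thus ?thesis unfolding D_def using Q10 by simp
  qed
  have e: "real_of_int P - Q * alpha = 1 / D"
  proof -
    have qa: "Q * alpha = Q * (P * x + P1) / D" by (subst rep) simp
    have pd: "real_of_int P = P * D / D" using D0 by simp
    have "real_of_int P - Q * alpha = (P * D - Q * (P * x + P1)) / D"
      unfolding qa by (subst pd) (simp only: diff_divide_distrib)
    also have "P * D - Q * (P * x + P1) = real_of_int (P * Q1 - P1 * Q)"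
      unfolding D_def by (simp add: algebra_simps)
    finally show ?thesis using det by simp
  qed
  have D1: "D > 1" using DQ Q1' by linarith
  have "real_of_int Q * alpha > 0" using Q1' alpha_pos by simp
  moreover have "1 / D > 0" using D0 by simp
  ultimately have "real_of_int P > 0" using e by linarith
  hence P1': "P \<ge> 1" by simp
  have P1'': "real_of_int P - 1 < real_of_int Q * alpha"
  proof -
    have "1 / D < 1" using D1 by simp
    thus ?thesis using e by linarith
  qed
  have cop: "coprime P Q"
  proof -
    have "gcd P Q dvd P * Q1 - P1 * Q" by simp
    hence "gcd P Q dvd 1" using det by simp
    thus ?thesis by (simp add: coprime_iff_gcd_eq_1)
  qed
  define p where "p = nat P"
  define q where "q = nat Q"
  have pP: "int p = P" unfolding p_def using P1' by simp
  have qQ: "int q = Q" unfolding q_def using Q1' by simp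
  have copn: "coprime p q" using cop pP qQ by (metis coprime_int_iff)
  define b where "b = ln 3 / ln (2::real)"
  have ab: "b = 1 / alpha" unfolding b_def alpha_def by simp
  have rp: "real p = real_of_int P" using pP by (metis of_int_of_nat_eq)
  have rq: "real q = real_of_int Q" using qQ by (metis of_int_of_nat_eq)
  have pb: "real p * b - real q = 1 / (D * alpha)"
  proof -
    have a0: "alpha \<noteq> 0" using alpha_pos by simp
    have "real p * b - real q = real_of_int P / alpha - Q * alpha / alpha"
      unfolding rp rq ab using a0 by simp
    also have "\<dots> = (real_of_int P - Q * alpha) / alpha" by (simp only: diff_divide_distrib)
    finally have "real p * b - real q = (real_of_int P - Q * alpha) / alpha" .
    thus ?thesis unfolding e by simp
  qed
  have pos: "0 < real p * b - real q" unfolding pb using D0 alpha_pos by simp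
  have small: "real (p - 1) * (real p * b - real q) < 1"
  proof -
    have "p \<ge> 1" using P1' unfolding p_def by simp
    hence rp1: "real (p - 1) = real_of_int P - 1" using rp by (simp add: of_nat_diff)
    have lt: "real_of_int P - 1 < D * alpha"
    proof -
      have "real_of_int Q * alpha < D * alpha" using DQ alpha_pos by (intro mult_strict_right_mono) auto
      thus ?thesis using P1'' by linarith
    qed
    moreover have "real_of_int P - 1 \<ge> 0" using P1' by simp
    have "(real_of_int P - 1) / (D * alpha) < 1" using D0 alpha_pos lt
      by (simp add: pos_divide_less_eq)
    thus ?thesis unfolding rp1 pb by simp
  qed
  have p1: "p \<ge> 1" using P1' unfolding p_def by simp
  have main: "\<bar>(\<Sum>i = 1..p. (2::real) ^ nat \<lfloor>real (i - 1) * b\<rfloor> / 3 ^ i) - real p / (6 * ln 2)\<bar> < 1/6"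
    by (rule sum_bound[OF p1 copn b_def pos small])
  have eqs: "real (i - 1) / alpha = real (i - 1) * b" for i
    unfolding ab by simp
  show ?thesis unfolding cn eqs using main rp unfolding p_def by simp
qed

end
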